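(* Let $K$ be an infinite field containing $\mathbb{F}_q$, let $B\in\mathrm{GL}_n(K)$, and let $N\in\mathrm{GL}_n(K)$ be such that $N^{-1}BN^{(q)}=\Delta$, where $\Delta$ is the matrix with $1$'s on the subdiagonal, last column $(a_0,a_1,\dots,a_{n-1})^T$ and all other entries $0$. Then the splitting fields over $K$ of the systems $BX^{(q)}=X$ and $\Delta^*X^{(q)}=X$ coincide, where $\Delta^*=(\Delta^{-1})^T$.
   Context: $X^{(q)}$, $N^{(q)}$ denote entrywise $q$-th powers. The splitting field over $K$ of $CX^{(q)}=X$ is the subfield of $K_{\mathrm{sep}}$ generated over $K$ by the coordinates of all its solutions in $K_{\mathrm{sep}}^n$. (Such $N$ exists since Frobenius modules over infinite fields are cyclic.) *)

theory Defs
  imports "Jordan_Normal_Form.Matrix" "HOL-Computational_Algebra.Polynomial"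
begin

definition is_subfield :: "'a::field set \<Rightarrow> bool" where
  "is_subfield F \<longleftrightarrow> 0 \<in> F \<and> 1 \<in> F \<and>
     (\<forall>x\<in>F. \<forall>y\<in>F. x + y \<in> F \<and> x - y \<in> F \<and> x * y \<in> F) \<and>
     (\<forall>x\<in>F. inverse x \<in> F)"

definition gen_field :: "'a::field set \<Rightarrow> 'a set \<Rightarrow> 'a set" where
  "gen_field F S = \<Inter> {E. is_subfield E \<and> F \<union> S \<subseteq> E}"

definition alg_closed :: "'a::field itself \<Rightarrow> bool" where
  "alg_closed _ \<longleftrightarrow> (\<forall>p::'a poly. degree p \<ge> 1 \<longrightarrow> (\<exists>x. poly p x = 0))"

definition mat_inv :: "'a::field mat \<Rightarrow> 'a mat" where
  "mat_inv A = (THE B. B \<in> carrier_mat (dim_row A) (dim_row A) \<and> inverts_mat A B \<and> inverts_mat B A)"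

definition qpow_mat :: "nat \<Rightarrow> 'a::field mat \<Rightarrow> 'a mat" where
  "qpow_mat q M = map_mat (\<lambda>x. x ^ q) M"

definition qpow_vec :: "nat \<Rightarrow> 'a::field vec \<Rightarrow> 'a vec" where
  "qpow_vec q X = map_vec (\<lambda>x. x ^ q) X"

definition Delta_mat :: "nat \<Rightarrow> (nat \<Rightarrow> 'a::field) \<Rightarrow> 'a mat" where
  "Delta_mat n a = mat n n (\<lambda>(i,j). if j = n - 1 then a i else if i = j + 1 then 1 else 0)"

definition dual_mat :: "'a::field mat \<Rightarrow> 'a mat" where
  "dual_mat A = transpose_mat (mat_inv A)"

definition frob_solutions :: "nat \<Rightarrow> nat \<Rightarrow> 'a::field mat \<Rightarrow> 'a vec set" where
  "frob_solutions q n C = {X. X \<in> carrier_vec n \<and> C *\<^sub>v qpow_vec q X = X}"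

(* splitting field over K (inside the ambient algebraically closed field) *)
definition frob_splitting_field :: "'a::field set \<Rightarrow> nat \<Rightarrow> nat \<Rightarrow> 'a mat \<Rightarrow> 'a set" where
  "frob_splitting_field K q n C = gen_field K (\<Union>X\<in>frob_solutions q n C. set\<^sub>v X)"

end

theory Submission
  imports Defs "Jordan_Normal_Form.Determinant"
begin


lemma sf_basic:
  assumes "is_subfield E"
  shows "0 \<in> E" "1 \<in> E" "x \<in> E \<Longrightarrow> y \<in> E \<Longrightarrow> x + y \<in> E"
    "x \<in> E \<Longrightarrow> y \<in> E \<Longrightarrow> x - y \<in> E" "x \<in> E \<Longrightarrow> y \<in> E \<Longrightarrow> x * y \<in> E"
    "x \<in> E \<Longrightarrow> inverse x \<in> E"
  using assms unfolding is_subfield_def by auto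

lemma sf_uminus: "is_subfield E \<Longrightarrow> x \<in> E \<Longrightarrow> - x \<in> E"
proof -
  assume E: "is_subfield E" and x: "x \<in> E"
  have "0 - x \<in> E" using sf_basic(1)[OF E] sf_basic(4)[OF E _ x] by blast
  thus ?thesis by simp
qed

lemma sf_power: "is_subfield E \<Longrightarrow> x \<in> E \<Longrightarrow> x ^ m \<in> E"
  by (induction m) (auto intro: sf_basic)

lemma sf_divide: "is_subfield E \<Longrightarrow> x \<in> E \<Longrightarrow> y \<in> E \<Longrightarrow> x / y \<in> E"
  by (simp add: divide_inverse sf_basic)

lemma sf_sum: "is_subfield E \<Longrightarrow> (\<And>i. i \<in> A \<Longrightarrow> f i \<in> E) \<Longrightarrow> sum f A \<in> E"
  by (induction A rule: infinite_finite_induct) (auto intro: sf_basic)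

lemma sf_prod: "is_subfield E \<Longrightarrow> (\<And>i. i \<in> A \<Longrightarrow> f i \<in> E) \<Longrightarrow> prod f A \<in> E"
  by (induction A rule: infinite_finite_induct) (auto intro: sf_basic)

lemma sf_sign: "is_subfield E \<Longrightarrow> (of_int (sign p) :: 'a::field) \<in> E"
  by (auto simp: sign_def intro: sf_basic sf_uminus)

lemma gen_field_sf: "is_subfield (gen_field K S)"
  unfolding gen_field_def is_subfield_def by blast

lemma gen_field_sup: "K \<union> S \<subseteq> gen_field K S"
  unfolding gen_field_def by blast

lemma gen_field_least: "is_subfield E \<Longrightarrow> K \<union> S \<subseteq> E \<Longrightarrow> gen_field K S \<subseteq> E"
  unfolding gen_field_def by blast

lemma gen_field_eq:
  assumes "S1 \<subseteq> gen_field K S2" "S2 \<subseteq> gen_field K S1"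
  shows "gen_field K S1 = gen_field K S2"
  using gen_field_least[OF gen_field_sf, of K S1 K S2] gen_field_least[OF gen_field_sf, of K S2 K S1]
    gen_field_sup[of K S1] gen_field_sup[of K S2] assms by blast

lemma det_in_sf:
  assumes E: "is_subfield E" and A: "A \<in> carrier_mat n n" and e: "\<And>i j. i < n \<Longrightarrow> j < n \<Longrightarrow> A $$ (i,j) \<in> E"
  shows "det A \<in> E"
proof -
  have "det A = (\<Sum> p \<in> {p. p permutes {0 ..< n}}. signof p * (\<Prod> i = 0 ..< n. A $$ (i, p i)))"
    using det_def'[OF A] .
  also have "\<dots> \<in> E"
  proof (rule sf_sum[OF E])
    fix p assume "p \<in> {p. p permutes {0 ..< n}}"
    hence p: "p permutes {0..<n}" by simp
    have "(\<Prod> i = 0 ..< n. A $$ (i, p i)) \<in> E"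
      by (rule sf_prod[OF E]) (use p e permutes_in_image in auto)
    thus "signof p * (\<Prod> i = 0 ..< n. A $$ (i, p i)) \<in> E"
      using sf_sign[OF E, of p] sf_basic(5)[OF E] by blast
  qed
  finally show ?thesis .
qed

lemma inv_entries_sf:
  fixes U Ui :: "'a::field mat"
  assumes E: "is_subfield E" and U: "U \<in> carrier_mat n n" and Ui: "Ui \<in> carrier_mat n n"
    and inv1: "U * Ui = 1\<^sub>m n" and inv2: "Ui * U = 1\<^sub>m n"
    and e: "\<And>i j. i < n \<Longrightarrow> j < n \<Longrightarrow> U $$ (i,j) \<in> E"
    and ij: "i < n" "j < n"
  shows "Ui $$ (i,j) \<in> E"
proof -
  have "det U * det Ui = 1" using det_mult[OF U Ui] inv1 by simp
  hence d: "det U \<noteq> 0" by auto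
  have adj: "adj_mat U \<in> carrier_mat n n" "U * adj_mat U = det U \<cdot>\<^sub>m 1\<^sub>m n" using adj_mat[OF U] by auto
  have "adj_mat U = (Ui * U) * adj_mat U" using inv2 adj by simp
  also have "\<dots> = Ui * (U * adj_mat U)" using Ui U adj by simp
  also have "\<dots> = det U \<cdot>\<^sub>m Ui" using adj(2) mult_smult_distrib[OF Ui, of "1\<^sub>m n" n "det U"] Ui by simp
  finally have "adj_mat U $$ (i,j) = det U * Ui $$ (i,j)" using ij Ui by simp
  hence eq: "Ui $$ (i,j) = adj_mat U $$ (i,j) / det U" using d by (simp add: field_simps)
  have "adj_mat U $$ (i,j) = cofactor U j i" using U ij by (simp add: adj_mat_def)
  also have "\<dots> \<in> E"
  proof -
    have md: "mat_delete U j i \<in> carrier_mat (n-1) (n-1)" using mat_delete_carrier[OF U] .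
    have "det (mat_delete U j i) \<in> E"
      by (rule det_in_sf[OF E md]) (use U in \<open>auto simp: mat_delete_def intro!: e\<close>)
    moreover have "(-1::'a)^(j+i) \<in> E"
      by (rule sf_power[OF E sf_uminus[OF E sf_basic(2)[OF E]]])
    ultimately show ?thesis unfolding cofactor_def using sf_basic(5)[OF E] by blast
  qed
  finally show ?thesis using eq sf_divide[OF E] det_in_sf[OF E U e] by simp
qed



context
  fixes q k :: nat
  assumes chp: "prime CHAR('a::field)" and qdef: "q = CHAR('a) ^ k"
begin

lemma q_pos: "q > 0" using chp qdef prime_gt_0_nat by simp

lemma frob_sum: "(sum (f :: _ \<Rightarrow> 'a) A) ^ q = sum (\<lambda>i. f i ^ q) A"
  using freshmans_dream_sum'[OF chp qdef] .

lemma frob_add: "((x::'a) + y) ^ q = x ^ q + y ^ q"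
  using freshmans_dream'[OF chp qdef] .

lemma qpow_mat_mult:
  assumes A: "(A::'a mat) \<in> carrier_mat n m" and B: "B \<in> carrier_mat m r"
  shows "qpow_mat q (A * B) = qpow_mat q A * qpow_mat q B"
proof (rule eq_matI)
  fix i j assume ij: "i < dim_row (qpow_mat q A * qpow_mat q B)" "j < dim_col (qpow_mat q A * qpow_mat q B)"
  hence i: "i < n" and j: "j < r" using A B by (auto simp: qpow_mat_def)
  have "qpow_mat q (A * B) $$ (i,j) = (\<Sum>l\<in>{0..<m}. A $$ (i,l) * B $$ (l,j)) ^ q"
    using i j A B by (simp add: qpow_mat_def scalar_prod_def)
  also have "\<dots> = (\<Sum>l\<in>{0..<m}. A $$ (i,l) ^ q * B $$ (l,j) ^ q)"
    by (simp add: frob_sum power_mult_distrib)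
  also have "\<dots> = (qpow_mat q A * qpow_mat q B) $$ (i,j)"
    using i j A B by (simp add: qpow_mat_def scalar_prod_def)
  finally show "qpow_mat q (A * B) $$ (i,j) = (qpow_mat q A * qpow_mat q B) $$ (i,j)" .
qed (use A B in \<open>auto simp: qpow_mat_def\<close>)

lemma qpow_mat_vec:
  assumes A: "(A::'a mat) \<in> carrier_mat n m" and v: "v \<in> carrier_vec m"
  shows "qpow_vec q (A *\<^sub>v v) = qpow_mat q A *\<^sub>v qpow_vec q v"
proof (rule eq_vecI)
  fix i assume "i < dim_vec (qpow_mat q A *\<^sub>v qpow_vec q v)"
  hence i: "i < n" using A by (auto simp: qpow_mat_def)
  have "qpow_vec q (A *\<^sub>v v) $ i = (\<Sum>l\<in>{0..<m}. A $$ (i,l) * v $ l) ^ q"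
    using i A v by (simp add: qpow_vec_def scalar_prod_def)
  also have "\<dots> = (\<Sum>l\<in>{0..<m}. A $$ (i,l) ^ q * v $ l ^ q)"
    by (simp add: frob_sum power_mult_distrib)
  also have "\<dots> = (qpow_mat q A *\<^sub>v qpow_vec q v) $ i"
    using i A v by (simp add: qpow_mat_def qpow_vec_def scalar_prod_def)
  finally show "qpow_vec q (A *\<^sub>v v) $ i = (qpow_mat q A *\<^sub>v qpow_vec q v) $ i" .
qed (use A v in \<open>auto simp: qpow_mat_def qpow_vec_def\<close>)

lemma qpow_one: "qpow_mat q (1\<^sub>m n :: 'a mat) = 1\<^sub>m n"
  by (rule eq_matI) (use q_pos in \<open>auto simp: qpow_mat_def\<close>)

lemma qpow_transpose: "qpow_mat q (transpose_mat A) = transpose_mat (qpow_mat q (A::'a mat))"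
  by (rule eq_matI) (auto simp: qpow_mat_def)

lemma qpow_carrier[simp]: "qpow_mat q A \<in> carrier_mat n m \<longleftrightarrow> (A::'a mat) \<in> carrier_mat n m"
  unfolding qpow_mat_def carrier_mat_def by simp

lemma qpow_vec_carrier[simp]: "qpow_vec q v \<in> carrier_vec n \<longleftrightarrow> (v::'a vec) \<in> carrier_vec n"
  unfolding qpow_vec_def carrier_vec_def by simp

end

lemma mat_inv_eq:
  fixes A Ai :: "'a::field mat"
  assumes A: "A \<in> carrier_mat n n" and Ai: "Ai \<in> carrier_mat n n"
    and i1: "A * Ai = 1\<^sub>m n" and i2: "Ai * A = 1\<^sub>m n"
  shows "mat_inv A = Ai"
  unfolding mat_inv_def
proof (rule the_equality)
  show "Ai \<in> carrier_mat (dim_row A) (dim_row A) \<and> inverts_mat A Ai \<and> inverts_mat Ai A"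
    using A Ai i1 i2 by (auto simp: inverts_mat_def)
  fix B assume "B \<in> carrier_mat (dim_row A) (dim_row A) \<and> inverts_mat A B \<and> inverts_mat B A"
  hence B: "B \<in> carrier_mat n n" and b1: "B * A = 1\<^sub>m n" using A by (auto simp: inverts_mat_def)
  have "B = B * (A * Ai)" using B i1 by simp
  also have "\<dots> = (B * A) * Ai" using A B Ai by simp
  also have "\<dots> = Ai" using b1 Ai by simp
  finally show "B = Ai" .
qed

lemma invertible_inv:
  fixes A :: "'a::field mat"
  assumes A: "A \<in> carrier_mat n n" and inv: "invertible_mat A"
  obtains Ai where "Ai \<in> carrier_mat n n" "A * Ai = 1\<^sub>m n" "Ai * A = 1\<^sub>m n"
proof -
  from inv obtain B where b: "inverts_mat A B" "inverts_mat B A" unfolding invertible_mat_def by auto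
  have 1: "A * B = 1\<^sub>m n" using b A by (auto simp: inverts_mat_def)
  hence "dim_col B = n" by (metis index_mult_mat(3) index_one_mat(3))
  moreover have "B * A = 1\<^sub>m (dim_row B)" using b by (auto simp: inverts_mat_def)
  hence "dim_row B = n" using A by (metis index_mult_mat(3) index_one_mat(3) carrier_matD(2))
  ultimately have Bc: "B \<in> carrier_mat n n" by auto
  have 2: "B * A = 1\<^sub>m n" using b(2) Bc by (simp add: inverts_mat_def)
  show ?thesis by (rule that[OF Bc 1 2])
qed



lemma mult_vec_sf:
  assumes E: "is_subfield E" and A: "A \<in> carrier_mat n n" and v: "v \<in> carrier_vec n"
    and eA: "\<And>i j. i < n \<Longrightarrow> j < n \<Longrightarrow> A $$ (i,j) \<in> E" and ev: "\<And>l. l < n \<Longrightarrow> v $ l \<in> E"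
    and i: "i < n"
  shows "(A *\<^sub>v v) $ i \<in> E"
proof -
  have "(A *\<^sub>v v) $ i = (\<Sum>l\<in>{0..<n}. A $$ (i,l) * v $ l)"
    using A v i by (simp add: scalar_prod_def)
  also have "\<dots> \<in> E" by (rule sf_sum[OF E]) (use eA ev i in \<open>auto intro: sf_basic(5)[OF E]\<close>)
  finally show ?thesis .
qed

context
  fixes q k :: nat
  assumes chp: "prime CHAR('a::field)" and qdef: "q = CHAR('a) ^ k"
begin

lemma pair_coords:
  fixes U Ui G :: "'a mat"
  assumes E: "is_subfield E" and Fq: "{x. x ^ q = x} \<subseteq> E"
    and U: "U \<in> carrier_mat n n" and Ui: "Ui \<in> carrier_mat n n" and G: "G \<in> carrier_mat n n"
    and inv: "U * Ui = 1\<^sub>m n" and qU: "qpow_mat q U = G * U"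
    and Y: "Y \<in> carrier_vec n" and sol: "transpose_mat G *\<^sub>v qpow_vec q Y = Y"
    and eUi: "\<And>i j. i < n \<Longrightarrow> j < n \<Longrightarrow> Ui $$ (i,j) \<in> E" and i: "i < n"
  shows "Y $ i \<in> E"
proof -
  define c where "c = transpose_mat U *\<^sub>v Y"
  have c: "c \<in> carrier_vec n" using U Y by (simp add: c_def)
  have "qpow_vec q c = qpow_mat q (transpose_mat U) *\<^sub>v qpow_vec q Y"
    unfolding c_def by (rule qpow_mat_vec[OF chp qdef]) (use U Y in auto)
  also have "\<dots> = transpose_mat (G * U) *\<^sub>v qpow_vec q Y"
    by (simp add: qpow_transpose[OF chp qdef] qU)
  also have "\<dots> = (transpose_mat U * transpose_mat G) *\<^sub>v qpow_vec q Y"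
    using transpose_mult[OF G U] by simp
  also have "\<dots> = transpose_mat U *\<^sub>v (transpose_mat G *\<^sub>v qpow_vec q Y)"
    by (rule assoc_mult_mat_vec) (use U G Y qpow_vec_carrier[OF chp qdef] in auto)
  also have "\<dots> = c" using sol c_def by simp
  finally have qc: "qpow_vec q c = c" .
  have ec: "c $ l \<in> E" if "l < n" for l
  proof -
    have "(qpow_vec q c) $ l = c $ l" using qc by simp
    hence "c $ l ^ q = c $ l" using that c by (simp add: qpow_vec_def)
    thus ?thesis using Fq by blast
  qed
  have "transpose_mat Ui *\<^sub>v c = (transpose_mat Ui * transpose_mat U) *\<^sub>v Y"
    unfolding c_def by (rule assoc_mult_mat_vec[symmetric]) (use U Ui Y in auto)
  also have "\<dots> = transpose_mat (U * Ui) *\<^sub>v Y" using transpose_mult[OF U Ui] by simp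
  also have "\<dots> = Y" using inv Y by simp
  finally have Yeq: "Y = transpose_mat Ui *\<^sub>v c" by simp
  have "(transpose_mat Ui *\<^sub>v c) $ i \<in> E"
    by (rule mult_vec_sf[OF E _ c _ ec i]) (use Ui eUi in auto)
  thus ?thesis using Yeq by simp
qed

lemma qpow_inv_transpose:
  fixes U Ui G Gi :: "'a mat"
  assumes U: "U \<in> carrier_mat n n" and Ui: "Ui \<in> carrier_mat n n"
    and G: "G \<in> carrier_mat n n" and Gi: "Gi \<in> carrier_mat n n"
    and i2: "Ui * U = 1\<^sub>m n" and i1: "U * Ui = 1\<^sub>m n" and g1: "G * Gi = 1\<^sub>m n"
    and qU: "qpow_mat q U = G * U"
  shows "qpow_mat q (transpose_mat Ui) = transpose_mat Gi * transpose_mat Ui"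
proof -
  have qUi: "qpow_mat q Ui \<in> carrier_mat n n" using Ui qpow_carrier[OF chp qdef] by blast
  have a: "qpow_mat q Ui * qpow_mat q U = 1\<^sub>m n"
    using qpow_mat_mult[OF chp qdef Ui U] i2 qpow_one[OF chp qdef] by simp
  have "Ui * Gi = (qpow_mat q Ui * qpow_mat q U) * (Ui * Gi)" using a Ui Gi by simp
  also have "\<dots> = qpow_mat q Ui * (qpow_mat q U * (Ui * Gi))"
    by (rule assoc_mult_mat[OF qUi _ mult_carrier_mat[OF Ui Gi]]) (use U qpow_carrier[OF chp qdef] in blast)
  also have "\<dots> = qpow_mat q Ui * ((G * U) * (Ui * Gi))" using qU by simp
  also have "(G * U) * (Ui * Gi) = G * (U * (Ui * Gi))" by (rule assoc_mult_mat[OF G U mult_carrier_mat[OF Ui Gi]])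
  also have "U * (Ui * Gi) = (U * Ui) * Gi" by (rule assoc_mult_mat[symmetric, OF U Ui Gi])
  also have "G * ((U * Ui) * Gi) = 1\<^sub>m n" using i1 g1 Gi by simp
  finally have "qpow_mat q Ui = Ui * Gi" using qUi by simp
  thus ?thesis using transpose_mult[OF Ui Gi] qpow_transpose[OF chp qdef] by simp
qed

end


lemma sep_card:
  fixes p :: "'a::field poly"
  assumes ac: "alg_closed TYPE('a)"
  shows "p \<noteq> 0 \<Longrightarrow> (\<And>x. poly p x = 0 \<Longrightarrow> poly (pderiv p) x \<noteq> 0) \<Longrightarrow> card {x. poly p x = 0} = degree p"
proof (induction "degree p" arbitrary: p)
  case 0
  then obtain a where pa: "p = [:a:]" by (metis degree_0_id)
  with 0 have "a \<noteq> 0" by auto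
  hence "{x. poly p x = 0} = {}" using pa by auto
  thus ?case using 0 by simp
next
  case (Suc d)
  have "degree p \<ge> 1" using Suc.hyps(2) by simp
  then obtain r where r: "poly p r = 0" using ac unfolding alg_closed_def by blast
  then obtain g where pg: "p = [:-r,1:] * g" using poly_eq_0_iff_dvd by (metis dvdE)
  have g0: "g \<noteq> 0" using Suc.prems(1) pg by auto
  have "degree p = degree [:-r,1:] + degree g" unfolding pg by (rule degree_mult_eq) (use g0 in auto)
  hence dg: "degree g = d" using Suc.hyps(2) by simp
  have pp: "poly p x = (x - r) * poly g x" for x by (subst pg) (simp add: algebra_simps)
  have pd: "poly (pderiv p) x = poly g x + (x - r) * poly (pderiv g) x" for x
  proof -
    have d1: "pderiv [:-r,1:] = 1" by (simp add: pderiv_pCons)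
    have "pderiv p = [:-r,1:] * pderiv g + g * pderiv [:-r,1:]" unfolding pg by (rule pderiv_mult)
    hence e: "pderiv p = [:-r,1:] * pderiv g + g" unfolding d1 by simp
    have "poly (pderiv p) x = (x - r) * poly (pderiv g) x + poly g x" by (subst e) (simp add: algebra_simps)
    thus ?thesis by simp
  qed
  have gr: "poly g r \<noteq> 0" using Suc.prems(2)[OF r] pd[of r] by simp
  have IH: "card {x. poly g x = 0} = degree g"
  proof (rule Suc.hyps(1)[OF dg[symmetric] g0])
    fix x assume gx: "poly g x = 0"
    hence "poly p x = 0" using pp by simp
    hence "poly (pderiv p) x \<noteq> 0" using Suc.prems(2) by blast
    thus "poly (pderiv g) x \<noteq> 0" using pd[of x] gx by auto
  qed
  have "{x. poly p x = 0} = insert r {x. poly g x = 0}" using pp by auto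
  moreover have "finite {x. poly g x = 0}" using poly_roots_finite[OF g0] .
  ultimately have "card {x. poly p x = 0} = Suc (card {x. poly g x = 0})" using gr by simp
  thus ?case using IH dg Suc.hyps(2) by simp
qed

lemma pderiv_sum: "pderiv (sum f A) = (\<Sum>x\<in>A. pderiv (f x))"
  by (induction A rule: infinite_finite_induct) (auto simp: pderiv_add)

definition Lp :: "nat \<Rightarrow> nat \<Rightarrow> (nat \<Rightarrow> 'a::field) \<Rightarrow> 'a poly" where
  "Lp q n a = monom 1 (q ^ n) - (\<Sum>l<n. monom (a l) (q ^ l))"

lemma poly_Lp: "poly (Lp q n a) x = x ^ (q ^ n) - (\<Sum>l<n. a l * x ^ (q ^ l))"
  by (simp add: Lp_def poly_sum poly_monom)

lemma Lp_card:
  fixes a :: "nat \<Rightarrow> 'a::field"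
  assumes ac: "alg_closed TYPE('a)" and chp: "prime CHAR('a)" and qdef: "q = CHAR('a) ^ k"
    and k: "k \<ge> 1" and n: "n \<ge> 1" and a0: "a 0 \<noteq> 0"
  shows "card {x. poly (Lp q n a) x = 0} = q ^ n"
proof -
  have "CHAR('a) > 1" using chp prime_gt_1_nat by blast
  hence q1: "q > 1" using k qdef one_less_power[of "CHAR('a)" k] by simp
  have inj: "q ^ l = q ^ m \<longleftrightarrow> l = m" for l m using q1 by (simp add: power_inject_exp)
  have c: "coeff (Lp q n a) (q ^ n) = 1"
    using inj by (simp add: Lp_def coeff_sum)
  hence L0: "Lp q n a \<noteq> 0" by auto
  have "degree (Lp q n a) \<le> q ^ n"
    unfolding Lp_def
    by (intro degree_diff_le degree_sum_le degree_monom_le)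
       (use q1 in \<open>auto intro: order.trans[OF degree_monom_le]\<close>)
  moreover have "degree (Lp q n a) \<ge> q ^ n" using c by (intro le_degree) simp
  ultimately have dL: "degree (Lp q n a) = q ^ n" by simp
  have ofn: "(of_nat (q ^ l) :: 'a) = 0" if "l \<ge> 1" for l
  proof -
    have e: "q ^ l = CHAR('a) ^ (k * l)" by (simp add: qdef power_mult)
    have "k * l > 0" using k that by simp
    hence "CHAR('a) dvd q ^ l" unfolding e by (simp add: dvd_power)
    thus ?thesis using of_nat_eq_0_iff_char_dvd by blast
  qed
  have pdm: "pderiv (monom (a l) (q ^ l)) = (if l = 0 then [:a 0:] else 0)" for l
    using ofn[of l] by (auto simp: pderiv_monom monom_0)
  have s: "(\<Sum>l<n. pderiv (monom (a l) (q^l))) = [:a 0:]"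
    using n by (simp only: pdm) (simp add: sum.delta)
  have m: "pderiv (monom (1::'a) (q^n)) = 0" using ofn[OF n] by (simp add: pderiv_monom)
  have "pderiv (Lp q n a) = pderiv (monom 1 (q^n)) - [:a 0:]"
    unfolding Lp_def pderiv_diff pderiv_sum s ..
  also have "\<dots> = - [:a 0:]" using m by simp
  finally have "poly (pderiv (Lp q n a)) x = - a 0" for x by simp
  hence "card {x. poly (Lp q n a) x = 0} = degree (Lp q n a)"
    using sep_card[OF ac L0] a0 by simp
  thus ?thesis using dL by simp
qed



definition moore :: "nat \<Rightarrow> nat \<Rightarrow> (nat \<Rightarrow> 'a::field) \<Rightarrow> 'a mat" where
  "moore q m z = mat m m (\<lambda>(i,j). z j ^ (q ^ i))"

lemma moore_carrier[simp]: "moore q m z \<in> carrier_mat m m" by (simp add: moore_def)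

lemma moore_step:
  fixes z :: "nat \<Rightarrow> 'a::field"
  assumes q1: "q > 1" and d: "det (moore q k z) \<noteq> 0" and R: "finite R" and cR: "card R > q ^ k"
  obtains x where "x \<in> R" "det (moore q (Suc k) (z(k := x))) \<noteq> 0"
proof -
  define M0 where "M0 = moore q (Suc k) z"
  define c where "c i = cofactor M0 i k" for i
  have del: "mat_delete (moore q (Suc k) (z(k:=x))) i k = mat_delete M0 i k" for x i
    by (rule eq_matI) (auto simp: mat_delete_def moore_def M0_def)
  have detx: "det (moore q (Suc k) (z(k:=x))) = (\<Sum>i<Suc k. c i * x ^ (q ^ i))" for x
  proof -
    have "det (moore q (Suc k) (z(k:=x))) = (\<Sum>i<Suc k. moore q (Suc k) (z(k:=x)) $$ (i,k) * cofactor (moore q (Suc k) (z(k:=x))) i k)"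
      by (rule laplace_expansion_column) auto
    also have "\<dots> = (\<Sum>i<Suc k. c i * x ^ (q ^ i))"
    proof (rule sum.cong)
      fix i assume i: "i \<in> {..<Suc k}"
      have cof: "cofactor (moore q (Suc k) (z(k:=x))) i k = c i" by (simp only: cofactor_def del c_def)
      have "moore q (Suc k) (z(k:=x)) $$ (i,k) = x ^ (q ^ i)" using i by (simp add: moore_def)
      thus "moore q (Suc k) (z(k:=x)) $$ (i,k) * cofactor (moore q (Suc k) (z(k:=x))) i k = c i * x ^ (q ^ i)"
        using cof by (simp add: mult.commute)
    qed simp
    finally show ?thesis .
  qed
  define F where "F = (\<Sum>i<Suc k. monom (c i) (q ^ i))"
  have pF: "poly F x = det (moore q (Suc k) (z(k:=x)))" for x
    by (simp add: F_def poly_sum poly_monom detx)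
  have inj: "q ^ l = q ^ m \<longleftrightarrow> l = m" for l m using q1 by (simp add: power_inject_exp)
  have "coeff F (q ^ k) = c k" using inj by (simp add: F_def coeff_sum)
  also have "mat_delete M0 k k = moore q k z"
    by (rule eq_matI) (auto simp: mat_delete_def moore_def M0_def)
  hence "c k = det (moore q k z)" by (simp add: c_def cofactor_def)
  finally have "coeff F (q ^ k) \<noteq> 0" using d by simp
  hence F0: "F \<noteq> 0" by auto
  have "degree F \<le> q ^ k"
    unfolding F_def
    by (intro degree_sum_le) (use q1 in \<open>auto intro: order.trans[OF degree_monom_le]\<close>)
  hence "card {x. poly F x = 0} \<le> q ^ k" using card_poly_roots_bound[OF F0] by linarith
  hence "\<not> R \<subseteq> {x. poly F x = 0}" using cR card_mono[OF poly_roots_finite[OF F0], of R] by linarith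
  then obtain x where "x \<in> R" "poly F x \<noteq> 0" by blast
  thus ?thesis using that pF by metis
qed

lemma moore_exists:
  fixes R :: "'a::field set"
  assumes q1: "q > 1" and R: "finite R" and cR: "card R = q ^ n"
  shows "k \<le> n \<Longrightarrow> \<exists>z. (\<forall>j<k. z j \<in> R) \<and> det (moore q k z) \<noteq> 0"
proof (induction k)
  case 0
  have "moore q 0 (\<lambda>_. 0::'a) = 1\<^sub>m 0" by (rule eq_matI) (auto simp: moore_def)
  thus ?case by (intro exI[of _ "\<lambda>_. 0"]) simp
next
  case (Suc k)
  then obtain z where z: "\<forall>j<k. z j \<in> R" "det (moore q k z) \<noteq> 0" by auto
  have "q ^ k < q ^ n" using Suc.prems q1 by (simp add: power_strict_increasing)
  then obtain x where x: "x \<in> R" "det (moore q (Suc k) (z(k := x))) \<noteq> 0"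
    using moore_step[OF q1 z(2) R] cR by auto
  have "\<forall>j<Suc k. (z(k:=x)) j \<in> R" using x z by (auto simp: less_Suc_eq)
  thus ?case using x(2) by blast
qed



lemma det_inv_exists:
  fixes P :: "'a::field mat"
  assumes P: "P \<in> carrier_mat n n" and d: "det P \<noteq> 0"
  obtains Pi where "Pi \<in> carrier_mat n n" "P * Pi = 1\<^sub>m n" "Pi * P = 1\<^sub>m n"
proof -
  define Pi where "Pi = inverse (det P) \<cdot>\<^sub>m adj_mat P"
  have adj: "adj_mat P \<in> carrier_mat n n" "P * adj_mat P = det P \<cdot>\<^sub>m 1\<^sub>m n" "adj_mat P * P = det P \<cdot>\<^sub>m 1\<^sub>m n"
    using adj_mat[OF P] by auto
  have Pi: "Pi \<in> carrier_mat n n" using adj by (simp add: Pi_def)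
  have sm: "inverse (det P) \<cdot>\<^sub>m (det P \<cdot>\<^sub>m 1\<^sub>m n) = (1\<^sub>m n :: 'a mat)"
    by (rule eq_matI) (use d in auto)
  have "P * Pi = inverse (det P) \<cdot>\<^sub>m (P * adj_mat P)" unfolding Pi_def by (rule mult_smult_distrib[OF P adj(1)])
  hence 1: "P * Pi = 1\<^sub>m n" using adj sm by simp
  have "Pi * P = inverse (det P) \<cdot>\<^sub>m (adj_mat P * P)" unfolding Pi_def by (rule mult_smult_assoc_mat[OF adj(1) P])
  hence 2: "Pi * P = 1\<^sub>m n" using adj sm by simp
  show ?thesis by (rule that[OF Pi 1 2])
qed

lemma frob_sol_0: "(\<Union>X\<in>frob_solutions q 0 C. set\<^sub>v X) = {}"
  by (auto simp: frob_solutions_def vec_set_def)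

lemma set_v_index: "X \<in> carrier_vec n \<Longrightarrow> i < n \<Longrightarrow> X $ i \<in> set\<^sub>v X"
  by (auto simp: vec_set_def)

lemma set_v_elem: "x \<in> set\<^sub>v X \<Longrightarrow> X \<in> carrier_vec n \<Longrightarrow> \<exists>i<n. x = X $ i"
  by (auto simp: vec_set_def)



theorem corollary4p4:
  fixes K :: "'a::field set" and q n k :: nat and B N :: "'a mat" and a :: "nat \<Rightarrow> 'a"
  assumes "alg_closed TYPE('a)"
    and "is_subfield K" and "infinite K"
    and "prime (CHAR('a))" and "k \<ge> 1" and "q = CHAR('a) ^ k"
    and "{x::'a. x ^ q = x} \<subseteq> K"
    and "B \<in> carrier_mat n n" and "invertible_mat B" and "elements_mat B \<subseteq> K"
    and "N \<in> carrier_mat n n" and "invertible_mat N" and "elements_mat N \<subseteq> K"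
    and "mat_inv N * B * qpow_mat q N = Delta_mat n a"
  shows "frob_splitting_field K q n B = frob_splitting_field K q n (dual_mat (Delta_mat n a))"
proof -
  note ac = assms(1) and Ksf = assms(2) and chp = assms(4) and k1 = assms(5) and qdef = assms(6)
    and Fq = assms(7) and Bc = assms(8) and Binv = assms(9) and BK = assms(10)
    and Nc = assms(11) and Ninv = assms(12) and NK = assms(13) and Deq = assms(14)
  show ?thesis
  proof (cases "n = 0")
    case True
    thus ?thesis by (simp only: frob_splitting_field_def True frob_sol_0)
  next
    case False
    hence n1: "n \<ge> 1" by simp
    have "CHAR('a) > 1" using chp prime_gt_1_nat by blast
    hence q1: "q > 1" using k1 qdef one_less_power[of "CHAR('a)" k] by simp
    note qmm = qpow_mat_mult[OF chp qdef] and qmv = qpow_mat_vec[OF chp qdef]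
      and q1m = qpow_one[OF chp qdef] and qc = qpow_carrier[OF chp qdef]
      and qvc = qpow_vec_carrier[OF chp qdef]
    have cancel: "A * (Ai * Y) = Y" if "A \<in> carrier_mat n n" "Ai \<in> carrier_mat n n" "Y \<in> carrier_mat n n"
      "A * Ai = 1\<^sub>m n" for A Ai Y :: "'a mat"
      using that assoc_mult_mat[of A n n Ai n Y n] by simp
    have cancelv: "A *\<^sub>v (Ai *\<^sub>v v) = v" if "A \<in> carrier_mat n n" "Ai \<in> carrier_mat n n" "v \<in> carrier_vec n"
      "A * Ai = 1\<^sub>m n" for A Ai :: "'a mat" and v
      using that assoc_mult_mat_vec[of A n n Ai n v] by simp
    have eK: "A $$ (i,j) \<in> K" if "elements_mat A \<subseteq> K" "A \<in> carrier_mat n n" "i < n" "j < n" for A i j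
      using that by blast
    obtain Ni where Ni: "Ni \<in> carrier_mat n n" "N * Ni = 1\<^sub>m n" "Ni * N = 1\<^sub>m n"
      using invertible_inv[OF Nc Ninv] by blast
    obtain Bi where Bi: "Bi \<in> carrier_mat n n" "B * Bi = 1\<^sub>m n" "Bi * B = 1\<^sub>m n"
      using invertible_inv[OF Bc Binv] by blast
    have mN: "mat_inv N = Ni" using mat_inv_eq[OF Nc Ni] .
    define D where "D = Delta_mat n a"
    have Dc: "D \<in> carrier_mat n n" by (simp add: D_def Delta_mat_def)
    define qN where "qN = qpow_mat q N"
    define qNi where "qNi = qpow_mat q Ni"
    have qNc: "qN \<in> carrier_mat n n" "qNi \<in> carrier_mat n n" using Nc Ni qc by (auto simp: qN_def qNi_def)
    have qNinv: "qN * qNi = 1\<^sub>m n" "qNi * qN = 1\<^sub>m n"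
      unfolding qN_def qNi_def
      by (simp_all only: qmm[OF Nc Ni(1), symmetric] qmm[OF Ni(1) Nc, symmetric] Ni(2,3) q1m)
    have Deq': "D = Ni * (B * qN)" using Deq mN Ni Bc qNc by (simp add: D_def qN_def)
    define Di where "Di = qNi * (Bi * N)"
    have Dic: "Di \<in> carrier_mat n n" using qNc Bi Nc by (simp add: Di_def)
    have DDi: "D * Di = 1\<^sub>m n"
    proof -
      have "D * Di = Ni * ((B * qN) * Di)" unfolding Deq' by (rule assoc_mult_mat) (use Ni Bc qNc Dic in auto)
      also have "(B * qN) * Di = B * (qN * Di)" by (rule assoc_mult_mat) (use Bc qNc Dic in auto)
      also have "qN * Di = Bi * N" unfolding Di_def by (rule cancel) (use qNc qNinv Bi Nc in auto)
      also have "B * (Bi * N) = N" by (rule cancel) (use Bc Bi Nc in auto)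
      finally show ?thesis using Ni by simp
    qed
    have DiD: "Di * D = 1\<^sub>m n"
    proof -
      have "Di * D = qNi * ((Bi * N) * D)" unfolding Di_def by (rule assoc_mult_mat) (use qNc Bi Nc Dc in auto)
      also have "(Bi * N) * D = Bi * (N * D)" by (rule assoc_mult_mat) (use Bi Nc Dc in auto)
      also have "N * D = B * qN" unfolding Deq' by (rule cancel) (use Nc Ni Bc qNc in auto)
      also have "Bi * (B * qN) = qN" by (rule cancel) (use Bc Bi qNc in auto)
      finally show ?thesis using qNinv by simp
    qed
    have dual: "dual_mat D = transpose_mat Di" unfolding dual_mat_def using mat_inv_eq[OF Dc Dic DDi DiD] by simp
    define SB where "SB = (\<Union>X\<in>frob_solutions q n B. set\<^sub>v X)"
    define SD where "SD = (\<Union>X\<in>frob_solutions q n D. set\<^sub>v X)"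
    define SW where "SW = (\<Union>X\<in>frob_solutions q n (dual_mat D). set\<^sub>v X)"
    have NK': "N $$ (i,j) \<in> K" if "i < n" "j < n" for i j using eK[OF NK Nc that] .
    have NiK: "Ni $$ (i,j) \<in> K" if "i < n" "j < n" for i j
      by (rule inv_entries_sf[OF Ksf Nc Ni NK' that])
    have KE: "K \<subseteq> gen_field K S" for S using gen_field_sup by blast
    have ND: "N * D = B * qN" unfolding Deq' by (rule cancel) (use Nc Ni Bc qNc in auto)
    have step1: "gen_field K SB = gen_field K SD"
    proof (rule gen_field_eq)
      show "SB \<subseteq> gen_field K SD"
      proof
        fix x assume "x \<in> SB"
        then obtain X where Xs: "X \<in> frob_solutions q n B" and xX: "x \<in> set\<^sub>v X" unfolding SB_def by blast
        have Xc: "X \<in> carrier_vec n" and Xsol: "B *\<^sub>v qpow_vec q X = X" using Xs by (auto simp: frob_solutions_def)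
        obtain i where i: "i < n" "x = X $ i" using set_v_elem[OF xX Xc] by blast
        define Y where "Y = Ni *\<^sub>v X"
        have Yc: "Y \<in> carrier_vec n" using Ni Xc by (simp add: Y_def)
        have qXc: "qpow_vec q X \<in> carrier_vec n" using Xc qvc by blast
        have "D *\<^sub>v qpow_vec q Y = (Ni * (B * qN)) *\<^sub>v (qNi *\<^sub>v qpow_vec q X)"
          unfolding Y_def qNi_def using qmv[OF Ni(1) Xc] Deq' by simp
        also have "\<dots> = Ni *\<^sub>v ((B * qN) *\<^sub>v (qNi *\<^sub>v qpow_vec q X))"
          by (rule assoc_mult_mat_vec) (use Ni Bc qNc qXc in auto)
        also have "(B * qN) *\<^sub>v (qNi *\<^sub>v qpow_vec q X) = B *\<^sub>v (qN *\<^sub>v (qNi *\<^sub>v qpow_vec q X))"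
          by (rule assoc_mult_mat_vec) (use Bc qNc qXc in auto)
        also have "qN *\<^sub>v (qNi *\<^sub>v qpow_vec q X) = qpow_vec q X"
          by (rule cancelv) (use qNc qNinv qXc in auto)
        finally have "D *\<^sub>v qpow_vec q Y = Y" using Xsol Y_def by simp
        hence Ys: "Y \<in> frob_solutions q n D" using Yc by (simp add: frob_solutions_def)
        have XY: "X = N *\<^sub>v Y" unfolding Y_def by (rule cancelv[symmetric]) (use Nc Ni Xc in auto)
        have "(N *\<^sub>v Y) $ i \<in> gen_field K SD"
        proof (rule mult_vec_sf[OF gen_field_sf Nc Yc _ _ i(1)])
          show "N $$ (i', j) \<in> gen_field K SD" if "i' < n" "j < n" for i' j using NK'[OF that] KE by blast
          show "Y $ l \<in> gen_field K SD" if "l < n" for l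
            using set_v_index[OF Yc that] Ys gen_field_sup[of K SD] unfolding SD_def by blast
        qed
        thus "x \<in> gen_field K SD" using i XY by simp
      qed
      show "SD \<subseteq> gen_field K SB"
      proof
        fix y assume "y \<in> SD"
        then obtain Y where Ys: "Y \<in> frob_solutions q n D" and yY: "y \<in> set\<^sub>v Y" unfolding SD_def by blast
        have Yc: "Y \<in> carrier_vec n" and Ysol: "D *\<^sub>v qpow_vec q Y = Y" using Ys by (auto simp: frob_solutions_def)
        obtain i where i: "i < n" "y = Y $ i" using set_v_elem[OF yY Yc] by blast
        define X where "X = N *\<^sub>v Y"
        have Xc: "X \<in> carrier_vec n" using Nc Yc by (simp add: X_def)
        have qYc: "qpow_vec q Y \<in> carrier_vec n" using Yc qvc by blast
        have "B *\<^sub>v qpow_vec q X = B *\<^sub>v (qN *\<^sub>v qpow_vec q Y)"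
          unfolding X_def qN_def using qmv[OF Nc Yc] by simp
        also have "\<dots> = (B * qN) *\<^sub>v qpow_vec q Y"
          by (rule assoc_mult_mat_vec[symmetric]) (use Bc qNc qYc in auto)
        also have "\<dots> = (N * D) *\<^sub>v qpow_vec q Y" using ND by simp
        also have "\<dots> = N *\<^sub>v (D *\<^sub>v qpow_vec q Y)"
          by (rule assoc_mult_mat_vec) (use Nc Dc qYc in auto)
        finally have "B *\<^sub>v qpow_vec q X = X" using Ysol X_def by simp
        hence Xs: "X \<in> frob_solutions q n B" using Xc by (simp add: frob_solutions_def)
        have YX: "Y = Ni *\<^sub>v X" unfolding X_def by (rule cancelv[symmetric]) (use Nc Ni Yc in auto)
        have "(Ni *\<^sub>v X) $ i \<in> gen_field K SB"
        proof (rule mult_vec_sf[OF gen_field_sf Ni(1) Xc _ _ i(1)])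
          show "Ni $$ (i', j) \<in> gen_field K SB" if "i' < n" "j < n" for i' j using NiK[OF that] KE by blast
          show "X $ l \<in> gen_field K SB" if "l < n" for l
            using set_v_index[OF Xc that] Xs gen_field_sup[of K SB] unfolding SB_def by blast
        qed
        thus "y \<in> gen_field K SB" using i YX by simp
      qed
    qed
    have a0: "a 0 \<noteq> 0"
    proof
      assume a0: "a 0 = 0"
      have "(D * Di) $$ (0,0) = (\<Sum>l\<in>{0..<n}. D $$ (0,l) * Di $$ (l,0))"
        using Dc Dic n1 by (simp add: scalar_prod_def)
      also have "\<dots> = 0" using a0 by (intro sum.neutral) (simp add: D_def Delta_mat_def)
      finally show False using DDi n1 by simp
    qed
    define R where "R = {x. poly (Lp q n a) x = 0}"
    have cR: "card R = q ^ n" unfolding R_def by (rule Lp_card[where q=q and k=k and n=n and a=a, OF ac chp qdef k1 n1 a0])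
    have "card R > 0" using cR q1 by simp
    hence fR: "finite R" by (rule card_ge_0_finite)
    obtain z where zR: "\<forall>j<n. z j \<in> R" and dP: "det (moore q n z) \<noteq> 0"
      using moore_exists[OF q1 fR cR, of n] by blast
    define P where "P = moore q n z"
    have Pc: "P \<in> carrier_mat n n" by (simp add: P_def)
    have root: "z j ^ (q ^ n) = (\<Sum>l\<in>{0..<n}. a l * z j ^ (q ^ l))" if "j < n" for j
      using zR that poly_Lp[of q n a "z j"] by (simp add: R_def lessThan_atLeast0)
    have qP: "qpow_mat q P = transpose_mat D * P"
    proof (rule eq_matI)
      fix i j assume "i < dim_row (transpose_mat D * P)" "j < dim_col (transpose_mat D * P)"
      hence i: "i < n" and j: "j < n" using Dc Pc by auto
      have lhs: "qpow_mat q P $$ (i,j) = z j ^ (q ^ Suc i)"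
        using i j by (simp add: qpow_mat_def P_def moore_def power_mult[symmetric] mult.commute)
      have rhs: "(transpose_mat D * P) $$ (i,j) = (\<Sum>l\<in>{0..<n}. D $$ (l,i) * z j ^ (q ^ l))"
        using i j Dc by (simp add: scalar_prod_def P_def moore_def)
      show "qpow_mat q P $$ (i,j) = (transpose_mat D * P) $$ (i,j)"
      proof (cases "i = n - 1")
        case True
        hence "Suc i = n" using n1 by simp
        moreover have "(\<Sum>l\<in>{0..<n}. D $$ (l,i) * z j ^ (q ^ l)) = (\<Sum>l\<in>{0..<n}. a l * z j ^ (q ^ l))"
          using True i by (intro sum.cong refl) (simp add: D_def Delta_mat_def)
        ultimately show ?thesis using lhs rhs root[OF j] by simp
      next
        case False
        have "(\<Sum>l\<in>{0..<n}. D $$ (l,i) * z j ^ (q ^ l)) = (\<Sum>l\<in>{0..<n}. if l = Suc i then z j ^ (q ^ l) else 0)"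
          using False i by (intro sum.cong refl) (simp add: D_def Delta_mat_def)
        also have "\<dots> = z j ^ (q ^ Suc i)" using False i by (simp add: sum.delta')
        finally show ?thesis using lhs rhs by simp
      qed
    qed (use Dc Pc in \<open>auto simp: qpow_mat_def\<close>)
    obtain Pi where Pi: "Pi \<in> carrier_mat n n" "P * Pi = 1\<^sub>m n" "Pi * P = 1\<^sub>m n"
      using det_inv_exists[OF Pc] dP P_def by blast
    have colq: "qpow_vec q (col A j) = col (qpow_mat q A) j" if "A \<in> carrier_mat n n" "j < n" for A :: "'a mat" and j
      by (rule eq_vecI) (use that in \<open>auto simp: qpow_vec_def qpow_mat_def\<close>)
    have tDc: "transpose_mat D \<in> carrier_mat n n" "transpose_mat Di \<in> carrier_mat n n" using Dc Dic by auto
    have colW: "col P j \<in> frob_solutions q n (dual_mat D)" if j: "j < n" for j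
    proof -
      have "dual_mat D *\<^sub>v qpow_vec q (col P j) = transpose_mat Di *\<^sub>v col (transpose_mat D * P) j"
        using colq[OF Pc j] qP dual by simp
      also have "\<dots> = col (transpose_mat Di * (transpose_mat D * P)) j"
        by (rule col_mult2[symmetric]) (use tDc Pc j in auto)
      also have "transpose_mat Di * (transpose_mat D * P) = (transpose_mat Di * transpose_mat D) * P"
        by (rule assoc_mult_mat[symmetric]) (use tDc Pc in auto)
      also have "transpose_mat Di * transpose_mat D = 1\<^sub>m n" using transpose_mult[OF Dc Dic, symmetric] DDi by simp
      finally show ?thesis using Pc j by (simp add: frob_solutions_def)
    qed
    have PSW: "P $$ (i,j) \<in> SW" if "i < n" "j < n" for i j
    proof -
      have "col P j $ i \<in> set\<^sub>v (col P j)" by (rule set_v_index) (use Pc that in auto)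
      thus ?thesis using colW[OF that(2)] Pc that unfolding SW_def by auto
    qed
    define M where "M = transpose_mat Pi"
    have Mc: "M \<in> carrier_mat n n" using Pi by (simp add: M_def)
    have g1: "transpose_mat D * transpose_mat Di = 1\<^sub>m n" using transpose_mult[OF Dic Dc, symmetric] DiD by simp
    have qM: "qpow_mat q M = Di * M"
      using qpow_inv_transpose[OF chp qdef Pc Pi(1) tDc Pi(3) Pi(2) g1 qP] by (simp add: M_def)
    have colV: "col M j \<in> frob_solutions q n D" if j: "j < n" for j
    proof -
      have "D *\<^sub>v qpow_vec q (col M j) = D *\<^sub>v col (Di * M) j" using colq[OF Mc j] qM by simp
      also have "\<dots> = col (D * (Di * M)) j" by (rule col_mult2[symmetric]) (use Dc Dic Mc j in auto)
      also have "D * (Di * M) = M" by (rule cancel) (use Dc Dic Mc DDi in auto)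
      finally show ?thesis using Mc j by (simp add: frob_solutions_def)
    qed
    have MSD: "M $$ (i,j) \<in> SD" if "i < n" "j < n" for i j
    proof -
      have "col M j $ i \<in> set\<^sub>v (col M j)" by (rule set_v_index) (use Mc that in auto)
      thus ?thesis using colV[OF that(2)] Mc that unfolding SD_def by auto
    qed
    have FqE: "{x. x ^ q = x} \<subseteq> gen_field K S" for S using Fq KE by blast
    have MtP: "M * transpose_mat P = 1\<^sub>m n" using transpose_mult[OF Pc Pi(1), symmetric] Pi(2) by (simp add: M_def)
    have tPM: "transpose_mat P * M = 1\<^sub>m n" using transpose_mult[OF Pi(1) Pc, symmetric] Pi(3) by (simp add: M_def)
    have tPc: "transpose_mat P \<in> carrier_mat n n" using Pc by simp
    have step2: "gen_field K SD = gen_field K SW"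
    proof (rule gen_field_eq)
      show "SD \<subseteq> gen_field K SW"
      proof
        fix y assume "y \<in> SD"
        then obtain Y where Ys: "Y \<in> frob_solutions q n D" and yY: "y \<in> set\<^sub>v Y" unfolding SD_def by blast
        have Yc: "Y \<in> carrier_vec n" and Ysol: "D *\<^sub>v qpow_vec q Y = Y" using Ys by (auto simp: frob_solutions_def)
        obtain i where i: "i < n" "y = Y $ i" using set_v_elem[OF yY Yc] by blast
        have ePi: "Pi $$ (i',j) \<in> gen_field K SW" if "i' < n" "j < n" for i' j
          by (rule inv_entries_sf[OF gen_field_sf Pc Pi(1) Pi(2) Pi(3) _ that])
             (use PSW gen_field_sup[of K SW] in blast)
        have "Y $ i \<in> gen_field K SW"
          by (rule pair_coords[OF chp qdef gen_field_sf FqE Pc Pi(1) tDc(1) Pi(2) qP Yc _ ePi i(1)])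
             (use Ysol in simp)
        thus "y \<in> gen_field K SW" using i by simp
      qed
      show "SW \<subseteq> gen_field K SD"
      proof
        fix y assume "y \<in> SW"
        then obtain Y where Ys: "Y \<in> frob_solutions q n (dual_mat D)" and yY: "y \<in> set\<^sub>v Y" unfolding SW_def by blast
        have Yc: "Y \<in> carrier_vec n" and Ysol: "transpose_mat Di *\<^sub>v qpow_vec q Y = Y"
          using Ys dual by (auto simp: frob_solutions_def)
        obtain i where i: "i < n" "y = Y $ i" using set_v_elem[OF yY Yc] by blast
        have ePt: "transpose_mat P $$ (i',j) \<in> gen_field K SD" if "i' < n" "j < n" for i' j
          by (rule inv_entries_sf[OF gen_field_sf Mc tPc MtP tPM _ that])
             (use MSD gen_field_sup[of K SD] in blast)
        have "Y $ i \<in> gen_field K SD"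
          by (rule pair_coords[OF chp qdef gen_field_sf FqE Mc tPc Dic MtP qM Yc Ysol ePt i(1)])
        thus "y \<in> gen_field K SD" using i by simp
      qed
    qed
    show ?thesis unfolding frob_splitting_field_def using step1 step2 by (simp add: SB_def SW_def D_def)
  qed
qed

end
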